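(* The regularly locally finitely presentable modules are dense, with respect to the interleaving distance, in the space of (isomorphism classes of) q-tame upper semicontinuous $n$-parameter persistence modules.
   Context: Fix a field $\mathbb{k}$. An $n$-parameter persistence module is a functor $V:\mathbf{R}^n\to\mathbf{Vect}_{\mathbb{k}}$ ($\mathbf{R}^n$ with componentwise order), structure maps $V_{s,t}$. Write $s\ll t$ if $s_i<t_i$ for all $i$; $s+\varepsilon$ adds $\varepsilon$ to each coordinate. $V$ is q-tame if $V_{s,t}$ has finite rank whenever $s\ll t$; upper semicontinuous if $V_s\to\lim_{\varepsilon>0}V_{s+\varepsilon}$ is an isomorphism for all $s$; pointwise finite-dimensional if every $V_s$ is finite-dimensional. Shifts $V[\varepsilon]_s=V_{s+\varepsilon}$, $\eta_\varepsilon:V\to V[\varepsilon]$ the structure maps; an $\varepsilon$-interleaving is $f:V\to W[\varepsilon]$, $g:W\to V[\varepsilon]$ with $g[\varepsilon]f=\eta_{2\varepsilon}$, $f[\varepsilon]g=\eta_{2\varepsilon}$, and $d_I$ is the infimal such $\varepsilon$. For $\varepsilon>0$ and the regular grid $\mathbf{Q}=(\varepsilon\mathbb{Z})^n$, the restriction-extension $V_{\mathbf{Q}}$ is the module with $(V_{\mathbf{Q}})_s=V_{\sup\{p\in\mathbf{Q}:p\le s\}}$ (componentwise rounding down to $\varepsilon\mathbb{Z}$), with structure maps induced from $V$. A q-tame upper semicontinuous module $V$ is regularly locally finitely presentable if it is pointwise finite-dimensional and $V\cong V_{\mathbf{Q}}$ for some regular grid $\mathbf{Q}=(\varepsilon\mathbb{Z})^n$,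 $\varepsilon>0$. *)

theory Defs
  imports "HOL-Analysis.Analysis"
begin

text \<open>
A persistence module over a field 'k, indexed by R^n = real^'n (componentwise
order), is represented inside an ambient k-vector space 'v (scalar multiplication sc):
  V :: real^'n => 'v set   gives the spaces V_s (subspaces of the ambient space),
  phi :: real^'n => real^'n => 'v => 'v   gives the structure maps V_{s,t} (only their
  restriction to V_s matters).
\<close>

definition lin_on :: "('k::field \<Rightarrow> 'v::ab_group_add \<Rightarrow> 'v) \<Rightarrow> ('k \<Rightarrow> 'w::ab_group_add \<Rightarrow> 'w)
    \<Rightarrow> 'v set \<Rightarrow> ('v \<Rightarrow> 'w) \<Rightarrow> bool" where
  "lin_on sc sc' S f \<longleftrightarrow>
     (\<forall>x\<in>S. \<forall>y\<in>S. f (x + y) = f x + f y) \<and> (\<forall>c. \<forall>x\<in>S. f (sc c x) = sc' c (f x))"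

definition fin_dim :: "('k::field \<Rightarrow> 'v::ab_group_add \<Rightarrow> 'v) \<Rightarrow> 'v set \<Rightarrow> bool" where
  "fin_dim sc S \<longleftrightarrow> (\<exists>B. finite B \<and> B \<subseteq> S \<and> module.span sc B = S)"

definition shift_pt :: "real^'n \<Rightarrow> real \<Rightarrow> real^'n" where
  "shift_pt s e = s + (\<chi> i. e)"

definition ll :: "real^'n \<Rightarrow> real^'n \<Rightarrow> bool" where
  "ll s t \<longleftrightarrow> (\<forall>i. s $ i < t $ i)"

definition pmod :: "('k::field \<Rightarrow> 'v::ab_group_add \<Rightarrow> 'v) \<Rightarrow> (real^'n \<Rightarrow> 'v set)
    \<Rightarrow> (real^'n \<Rightarrow> real^'n \<Rightarrow> 'v \<Rightarrow> 'v) \<Rightarrow> bool" where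
  "pmod sc V phi \<longleftrightarrow>
     (\<forall>s. module.subspace sc (V s)) \<and>
     (\<forall>s t. s \<le> t \<longrightarrow> lin_on sc sc (V s) (phi s t) \<and> phi s t ` V s \<subseteq> V t) \<and>
     (\<forall>s. \<forall>x\<in>V s. phi s s x = x) \<and>
     (\<forall>s t u. s \<le> t \<longrightarrow> t \<le> u \<longrightarrow> (\<forall>x\<in>V s. phi t u (phi s t x) = phi s u x))"

definition pmod_hom :: "('k::field \<Rightarrow> 'v::ab_group_add \<Rightarrow> 'v) \<Rightarrow> (real^'n \<Rightarrow> 'v set)
    \<Rightarrow> (real^'n \<Rightarrow> real^'n \<Rightarrow> 'v \<Rightarrow> 'v)
    \<Rightarrow> ('k \<Rightarrow> 'w::ab_group_add \<Rightarrow> 'w) \<Rightarrow> (real^'n \<Rightarrow> 'w set)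
    \<Rightarrow> (real^'n \<Rightarrow> real^'n \<Rightarrow> 'w \<Rightarrow> 'w) \<Rightarrow> (real^'n \<Rightarrow> 'v \<Rightarrow> 'w) \<Rightarrow> bool" where
  "pmod_hom sc V phi sc' W psi h \<longleftrightarrow>
     (\<forall>s. lin_on sc sc' (V s) (h s) \<and> h s ` V s \<subseteq> W s) \<and>
     (\<forall>s t. s \<le> t \<longrightarrow> (\<forall>x\<in>V s. h t (phi s t x) = psi s t (h s x)))"

definition pmod_iso :: "('k::field \<Rightarrow> 'v::ab_group_add \<Rightarrow> 'v) \<Rightarrow> (real^'n \<Rightarrow> 'v set)
    \<Rightarrow> (real^'n \<Rightarrow> real^'n \<Rightarrow> 'v \<Rightarrow> 'v)
    \<Rightarrow> ('k \<Rightarrow> 'w::ab_group_add \<Rightarrow> 'w) \<Rightarrow> (real^'n \<Rightarrow> 'w set)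
    \<Rightarrow> (real^'n \<Rightarrow> real^'n \<Rightarrow> 'w \<Rightarrow> 'w) \<Rightarrow> bool" where
  "pmod_iso sc V phi sc' W psi \<longleftrightarrow>
     (\<exists>h. pmod_hom sc V phi sc' W psi h \<and> (\<forall>s. bij_betw (h s) (V s) (W s)))"

definition shift_sp :: "(real^'n \<Rightarrow> 'v set) \<Rightarrow> real \<Rightarrow> real^'n \<Rightarrow> 'v set" where
  "shift_sp V e s = V (shift_pt s e)"

definition shift_map :: "(real^'n \<Rightarrow> real^'n \<Rightarrow> 'v \<Rightarrow> 'v) \<Rightarrow> real \<Rightarrow> real^'n \<Rightarrow> real^'n \<Rightarrow> 'v \<Rightarrow> 'v" where
  "shift_map phi e s t = phi (shift_pt s e) (shift_pt t e)"

definition q_tame :: "('k::field \<Rightarrow> 'v::ab_group_add \<Rightarrow> 'v) \<Rightarrow> (real^'n \<Rightarrow> 'v set)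
    \<Rightarrow> (real^'n \<Rightarrow> real^'n \<Rightarrow> 'v \<Rightarrow> 'v) \<Rightarrow> bool" where
  "q_tame sc V phi \<longleftrightarrow> (\<forall>s t. ll s t \<longrightarrow> fin_dim sc (phi s t ` V s))"

definition pw_fin_dim :: "('k::field \<Rightarrow> 'v::ab_group_add \<Rightarrow> 'v) \<Rightarrow> (real^'n \<Rightarrow> 'v set) \<Rightarrow> bool" where
  "pw_fin_dim sc V \<longleftrightarrow> (\<forall>s. fin_dim sc (V s))"

text \<open>The limit lim_{e>0} V_{s+e} in Vect, constructed as the space of compatible families
  (x_e)_{e>0}, x_e in V_{s+e}, with V_{s+e,s+e'}(x_e) = x_e' for e <= e'
  (families are extended by 0 for e <= 0).\<close>
definition usc_limit :: "(real^'n \<Rightarrow> 'v::zero set) \<Rightarrow> (real^'n \<Rightarrow> real^'n \<Rightarrow> 'v \<Rightarrow> 'v)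
    \<Rightarrow> real^'n \<Rightarrow> (real \<Rightarrow> 'v) set" where
  "usc_limit V phi s = {x. (\<forall>e. e \<le> 0 \<longrightarrow> x e = 0) \<and> (\<forall>e>0. x e \<in> V (shift_pt s e)) \<and>
       (\<forall>e e'. 0 < e \<longrightarrow> e \<le> e' \<longrightarrow> phi (shift_pt s e) (shift_pt s e') (x e) = x e')}"

text \<open>upper semicontinuous: the canonical map V_s -> lim_{e>0} V_{s+e} is an isomorphism
  (it is linear, so being an isomorphism means being bijective)\<close>
definition usc :: "(real^'n \<Rightarrow> 'v::zero set) \<Rightarrow> (real^'n \<Rightarrow> real^'n \<Rightarrow> 'v \<Rightarrow> 'v) \<Rightarrow> bool" where
  "usc V phi \<longleftrightarrow> (\<forall>s. bij_betw (\<lambda>x e. if 0 < e then phi s (shift_pt s e) x else 0)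
                                   (V s) (usc_limit V phi s))"

definition interleaving :: "('k::field \<Rightarrow> 'v::ab_group_add \<Rightarrow> 'v) \<Rightarrow> (real^'n \<Rightarrow> 'v set)
    \<Rightarrow> (real^'n \<Rightarrow> real^'n \<Rightarrow> 'v \<Rightarrow> 'v)
    \<Rightarrow> ('k \<Rightarrow> 'w::ab_group_add \<Rightarrow> 'w) \<Rightarrow> (real^'n \<Rightarrow> 'w set)
    \<Rightarrow> (real^'n \<Rightarrow> real^'n \<Rightarrow> 'w \<Rightarrow> 'w) \<Rightarrow> real
    \<Rightarrow> (real^'n \<Rightarrow> 'v \<Rightarrow> 'w) \<Rightarrow> (real^'n \<Rightarrow> 'w \<Rightarrow> 'v) \<Rightarrow> bool" where
  "interleaving sc V phi sc' W psi e f g \<longleftrightarrow>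
     pmod_hom sc V phi sc' (shift_sp W e) (shift_map psi e) f \<and>
     pmod_hom sc' W psi sc (shift_sp V e) (shift_map phi e) g \<and>
     (\<forall>s. \<forall>x\<in>V s. g (shift_pt s e) (f s x) = phi s (shift_pt s (2 * e)) x) \<and>
     (\<forall>s. \<forall>y\<in>W s. f (shift_pt s e) (g s y) = psi s (shift_pt s (2 * e)) y)"

text \<open>interleaving distance (infimum over e >= 0; infinity if no interleaving exists)\<close>
definition d_I :: "('k::field \<Rightarrow> 'v::ab_group_add \<Rightarrow> 'v) \<Rightarrow> (real^'n \<Rightarrow> 'v set)
    \<Rightarrow> (real^'n \<Rightarrow> real^'n \<Rightarrow> 'v \<Rightarrow> 'v)
    \<Rightarrow> ('k \<Rightarrow> 'w::ab_group_add \<Rightarrow> 'w) \<Rightarrow> (real^'n \<Rightarrow> 'w set)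
    \<Rightarrow> (real^'n \<Rightarrow> real^'n \<Rightarrow> 'w \<Rightarrow> 'w) \<Rightarrow> ereal" where
  "d_I sc V phi sc' W psi =
     Inf {ereal e | e. 0 \<le> e \<and> (\<exists>f g. interleaving sc V phi sc' W psi e f g)}"

definition grid_floor :: "real \<Rightarrow> real^'n \<Rightarrow> real^'n" where
  "grid_floor e s = (\<chi> i. e * of_int \<lfloor>s $ i / e\<rfloor>)"

text \<open>restriction-extension V_Q for Q = (e Z)^n\<close>
definition grid_sp :: "(real^'n \<Rightarrow> 'v set) \<Rightarrow> real \<Rightarrow> real^'n \<Rightarrow> 'v set" where
  "grid_sp V e s = V (grid_floor e s)"

definition grid_map :: "(real^'n \<Rightarrow> real^'n \<Rightarrow> 'v \<Rightarrow> 'v) \<Rightarrow> real \<Rightarrow> real^'n \<Rightarrow> real^'n \<Rightarrow> 'v \<Rightarrow> 'v" where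
  "grid_map phi e s t = phi (grid_floor e s) (grid_floor e t)"

definition reg_lfp :: "('k::field \<Rightarrow> 'v::ab_group_add \<Rightarrow> 'v) \<Rightarrow> (real^'n \<Rightarrow> 'v set)
    \<Rightarrow> (real^'n \<Rightarrow> real^'n \<Rightarrow> 'v \<Rightarrow> 'v) \<Rightarrow> bool" where
  "reg_lfp sc V phi \<longleftrightarrow> q_tame sc V phi \<and> usc V phi \<and> pw_fin_dim sc V \<and>
     (\<exists>e>0. pmod_iso sc V phi sc (grid_sp V e) (grid_map phi e))"

end

theory Submission imports Defs begin

lemma shift_nth[simp]: "shift_pt s e $ i = s $ i + e" by (simp add: shift_pt_def)
lemma gf_nth[simp]: "grid_floor e s $ i = e * of_int \<lfloor>s $ i / e\<rfloor>" by (simp add: grid_floor_def)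

lemma gf_le: assumes "e>0" shows "grid_floor e s \<le> s"
  unfolding less_eq_vec_def
proof
  fix i
  have "of_int \<lfloor>s$i/e\<rfloor> \<le> s$i/e" by (rule of_int_floor_le)
  then have "of_int \<lfloor>s$i/e\<rfloor> * e \<le> s$i" using assms by (simp add: le_divide_eq)
  then show "grid_floor e s $ i \<le> s $ i" by (simp add: mult.commute[of e])
qed

lemma gf_ge: assumes "e>0" shows "s \<le> grid_floor e (shift_pt s e)"
  unfolding less_eq_vec_def
proof
  fix i
  have "(s$i+e)/e - 1 < of_int \<lfloor>(s$i+e)/e\<rfloor>" by linarith
  then have "s$i/e < of_int \<lfloor>(s$i+e)/e\<rfloor>" using assms by (simp add: field_simps)
  then have "s$i < of_int \<lfloor>(s$i+e)/e\<rfloor> * e" using assms by (simp add: divide_less_eq)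
  then show "s $ i \<le> grid_floor e (shift_pt s e) $ i" by (simp add: mult.commute[of e])
qed

lemma gf_mono: assumes "e>0" "s \<le> t" shows "grid_floor e s \<le> grid_floor e t"
  unfolding less_eq_vec_def
proof
  fix i
  have "s$i/e \<le> t$i/e" using assms by (simp add: less_eq_vec_def divide_right_mono)
  then have "\<lfloor>s$i/e\<rfloor> \<le> \<lfloor>t$i/e\<rfloor>" by (rule floor_mono)
  then show "grid_floor e s $ i \<le> grid_floor e t $ i" using assms by simp
qed

lemma gf_idem: assumes "e>0" shows "grid_floor e (grid_floor e s) = grid_floor e s"
  using assms by (simp add: vec_eq_iff)

lemma shift_mono: "s \<le> t \<Longrightarrow> shift_pt s a \<le> shift_pt t a"
  by (simp add: less_eq_vec_def)
lemma shift_ge: "0 \<le> a \<Longrightarrow> s \<le> shift_pt s a"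
  by (simp add: less_eq_vec_def)
lemma shift_shift: "shift_pt (shift_pt s a) b = shift_pt s (a+b)"
  by (simp add: vec_eq_iff)
lemma ll_shift: assumes "0<a" "s \<le> t" shows "ll s (shift_pt t a)"
  unfolding ll_def
proof
  fix i
  have "s$i \<le> t$i" using assms by (simp add: less_eq_vec_def)
  then show "s$i < shift_pt t a $ i" using assms by simp
qed

lemma gf_loc_const: assumes "e>0"
  shows "\<exists>d>0. \<forall>a. 0<a \<and> a<d \<longrightarrow> grid_floor e (shift_pt s a) = grid_floor e s"
proof -
  have "\<forall>\<^sub>F a in at_right 0. \<forall>i. \<lfloor>(s$i+a)/e\<rfloor> = \<lfloor>s$i/e\<rfloor>"
  proof (rule eventually_all_finite)
    fix i
    define k where "k = \<lfloor>s$i/e\<rfloor>"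
    have k1: "of_int k \<le> s$i/e" "s$i/e < of_int k + 1" unfolding k_def by linarith+
    have "s$i < e * (of_int k + 1)" using k1 assms by (simp add: field_simps)
    then have dpos: "e * (of_int k + 1) - s$i > 0" by simp
    show "\<forall>\<^sub>F a in at_right 0. \<lfloor>(s$i+a)/e\<rfloor> = \<lfloor>s$i/e\<rfloor>"
      unfolding eventually_at_right_field
    proof (intro exI conjI allI impI)
      show "e * (of_int k + 1) - s$i > 0" by (rule dpos)
      fix a :: real assume a: "0 < a" "a < e * (of_int k + 1) - s$i"
      have "of_int k \<le> (s$i+a)/e" using k1(1) a assms by (simp add: field_simps)
      moreover have "(s$i+a)/e < of_int k + 1" using a assms by (simp add: field_simps)
      ultimately show "\<lfloor>(s$i+a)/e\<rfloor> = \<lfloor>s$i/e\<rfloor>" unfolding k_def[symmetric] by linarith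
    qed
  qed
  then obtain b where b: "b>0" "\<forall>a>0. a < b \<longrightarrow> (\<forall>i. \<lfloor>(s$i+a)/e\<rfloor> = \<lfloor>s$i/e\<rfloor>)"
    unfolding eventually_at_right_field by auto
  show ?thesis using b by (intro exI[of _ b]) (auto simp: vec_eq_iff)
qed

lemma lin_on_mono: "lin_on sc sc' S f \<Longrightarrow> T \<subseteq> S \<Longrightarrow> lin_on sc sc' T f"
  unfolding lin_on_def by blast

lemma subspace_image:
  assumes "module sc" "module sc'" "module.subspace sc S" "lin_on sc sc' S f"
  shows "module.subspace sc' (f ` S)"
proof -
  have S: "0 \<in> S" "\<forall>x\<in>S. \<forall>y\<in>S. x + y \<in> S" "\<forall>c. \<forall>x\<in>S. sc c x \<in> S"
    using assms(3) unfolding module.subspace_def[OF assms(1)] by auto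
  have L: "\<forall>x\<in>S. \<forall>y\<in>S. f (x + y) = f x + f y" "\<forall>c. \<forall>x\<in>S. f (sc c x) = sc' c (f x)"
    using assms(4) unfolding lin_on_def by auto
  have "f 0 = f 0 + f 0" using L(1) S(1) by (metis add.right_neutral)
  then have f0: "f 0 = 0" by simp
  show ?thesis unfolding module.subspace_def[OF assms(2)]
  proof (intro conjI ballI allI)
    show "0 \<in> f ` S" using f0 S(1) by (metis image_eqI)
  next
    fix x y assume "x \<in> f ` S" "y \<in> f ` S"
    then obtain a b where "a \<in> S" "b \<in> S" "x = f a" "y = f b" by auto
    then show "x + y \<in> f ` S" using L(1) S(2) by (metis image_eqI)
  next
    fix c x assume "x \<in> f ` S"
    then obtain a where "a \<in> S" "x = f a" by auto
    then show "sc' c x \<in> f ` S" using L(2) S(3) by (metis image_eqI)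
  qed
qed

theorem lemma4p22:
  fixes sc :: "'k::field \<Rightarrow> 'v::ab_group_add \<Rightarrow> 'v"
    and V :: "real^'n \<Rightarrow> 'v set"
    and phi :: "real^'n \<Rightarrow> real^'n \<Rightarrow> 'v \<Rightarrow> 'v"
    and delta :: real
  assumes "vector_space sc"
    and "pmod sc V phi"
    and "q_tame sc V phi"
    and "usc V phi"
    and "delta > 0"
  shows "\<exists>W psi. pmod sc W psi \<and> reg_lfp sc W psi \<and> d_I sc V phi sc W psi < ereal delta"
proof -
  have md: "module sc" using assms(1) unfolding module_def vector_space_def by auto
  define \<epsilon> where "\<epsilon> = delta / 2"
  have ep: "\<epsilon> > 0" "\<epsilon> < delta" using assms(5) unfolding \<epsilon>_def by auto
  define G where "G s = grid_floor \<epsilon> s" for s :: "real^'n"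
  define P where "P s = shift_pt (G s) \<epsilon>" for s
  define W where "W s = phi (G s) (P s) ` V (G s)" for s
  define psi where "psi s t = phi (P s) (P t)" for s t
  have sub: "\<And>s. module.subspace sc (V s)" using assms(2) unfolding pmod_def by auto
  have lin: "\<And>s t. s \<le> t \<Longrightarrow> lin_on sc sc (V s) (phi s t)" using assms(2) unfolding pmod_def by auto
  have maps: "\<And>s t x. s \<le> t \<Longrightarrow> x \<in> V s \<Longrightarrow> phi s t x \<in> V t" using assms(2) unfolding pmod_def by blast
  have idf: "\<And>s x. x \<in> V s \<Longrightarrow> phi s s x = x" using assms(2) unfolding pmod_def by auto
  have comp: "\<And>s t u x. s \<le> t \<Longrightarrow> t \<le> u \<Longrightarrow> x \<in> V s \<Longrightarrow> phi t u (phi s t x) = phi s u x"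
    using assms(2) unfolding pmod_def by auto
  have GP: "\<And>s. G s \<le> P s" unfolding P_def using ep by (simp add: shift_ge)
  have Gmono: "\<And>s t. s \<le> t \<Longrightarrow> G s \<le> G t" unfolding G_def using ep by (simp add: gf_mono)
  have Pmono: "\<And>s t. s \<le> t \<Longrightarrow> P s \<le> P t" unfolding P_def using Gmono by (simp add: shift_mono)
  have Pshift: "\<And>s. P s \<le> shift_pt s \<epsilon>" unfolding P_def G_def using ep by (simp add: shift_mono gf_le)
  have sG: "\<And>s. s \<le> G (shift_pt s \<epsilon>)" unfolding G_def using ep by (simp add: gf_ge)
  have sP: "\<And>s. s \<le> P (shift_pt s \<epsilon>)" using sG GP order_trans by blast
  have WsubV: "\<And>s. W s \<subseteq> V (P s)" unfolding W_def using maps GP by blast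
  have ll_GP: "\<And>s t. s \<le> t \<Longrightarrow> ll (G s) (P t)" unfolding P_def using ep Gmono by (simp add: ll_shift)
  have sh_le: "\<And>s a b. a \<le> b \<Longrightarrow> shift_pt s a \<le> shift_pt s b" by (simp add: less_eq_vec_def)
  have sh_ge: "\<And>s a. 0 \<le> a \<Longrightarrow> s \<le> shift_pt s a" by (simp add: shift_ge)
  have Wimg: "psi s t ` W s \<subseteq> W t" if "s \<le> t" for s t
  proof
    fix y assume "y \<in> psi s t ` W s"
    then obtain x where x: "x \<in> V (G s)" "y = psi s t (phi (G s) (P s) x)" unfolding W_def by auto
    have "y = phi (G s) (P t) x" using x comp[OF GP Pmono[OF that]] unfolding psi_def by simp
    also have "\<dots> = phi (G t) (P t) (phi (G s) (G t) x)" using comp[OF Gmono[OF that] GP x(1)] by simp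
    finally show "y \<in> W t" unfolding W_def using maps[OF Gmono[OF that] x(1)] by blast
  qed
  have pW: "pmod sc W psi"
    unfolding pmod_def
  proof (intro conjI allI impI ballI)
    fix s show "module.subspace sc (W s)" unfolding W_def
      using subspace_image[OF md md sub lin[OF GP]] .
  next
    fix s t :: "real^'n" assume st: "s \<le> t"
    show "lin_on sc sc (W s) (psi s t)" unfolding psi_def
      using lin_on_mono[OF lin[OF Pmono[OF st]] WsubV] .
    show "psi s t ` W s \<subseteq> W t" using Wimg[OF st] .
  next
    fix s y assume "y \<in> W s" then show "psi s s y = y" unfolding psi_def using idf WsubV by blast
  next
    fix s t u y assume "s \<le> t" "t \<le> u" "y \<in> W s"
    then show "psi t u (psi s t y) = psi s u y" unfolding psi_def
      using comp[OF Pmono Pmono] WsubV by blast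
  qed
  have Wmaps: "\<And>s t y. s \<le> t \<Longrightarrow> y \<in> W s \<Longrightarrow> psi s t y \<in> W t" using Wimg by blast
  have Wcomp: "\<And>s t u y. s \<le> t \<Longrightarrow> t \<le> u \<Longrightarrow> y \<in> W s \<Longrightarrow> psi t u (psi s t y) = psi s u y"
    using pW unfolding pmod_def by blast
  have qW: "q_tame sc W psi"
    unfolding q_tame_def
  proof (intro allI impI)
    fix s t :: "real^'n" assume "ll s t"
    then have st: "s \<le> t" unfolding ll_def less_eq_vec_def by (simp add: less_imp_le)
    have "psi s t ` W s = phi (G s) (P t) ` V (G s)" unfolding W_def psi_def image_image
      using comp[OF GP Pmono[OF st]] by (auto intro!: image_cong)
    then show "fin_dim sc (psi s t ` W s)" using assms(3) ll_GP[OF st] unfolding q_tame_def by simp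
  qed
  have fW: "pw_fin_dim sc W" unfolding pw_fin_dim_def W_def
    using assms(3) ll_GP[OF order_refl] unfolding q_tame_def P_def by simp
  have uW: "usc W psi"
    unfolding usc_def
  proof
    fix s :: "real^'n"
    obtain d where d: "d > 0" "\<And>a. 0 < a \<Longrightarrow> a < d \<Longrightarrow> G (shift_pt s a) = G s"
      using gf_loc_const[OF ep(1), of s] unfolding G_def by blast
    have dP: "\<And>a. 0 < a \<Longrightarrow> a < d \<Longrightarrow> P (shift_pt s a) = P s" unfolding P_def using d by simp
    have dW: "\<And>a. 0 < a \<Longrightarrow> a < d \<Longrightarrow> W (shift_pt s a) = W s" unfolding W_def P_def using d by simp
    define F where "F = (\<lambda>x e. if 0 < e then psi s (shift_pt s e) x else 0)"
    define e1 where "e1 = d / 2"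
    have e1: "0 < e1" "e1 < d" unfolding e1_def using d by auto
    have Fsmall: "\<And>x a. x \<in> W s \<Longrightarrow> 0 < a \<Longrightarrow> a < d \<Longrightarrow> F x a = x"
      unfolding F_def psi_def using dP idf WsubV by (simp add: subset_iff)
    have inj: "inj_on F (W s)"
    proof (rule inj_onI)
      fix x y assume "x \<in> W s" "y \<in> W s" "F x = F y"
      then show "x = y" using Fsmall[OF _ e1] by metis
    qed
    have sub1: "F ` W s \<subseteq> usc_limit W psi s"
    proof
      fix z assume "z \<in> F ` W s"
      then obtain x where x: "x \<in> W s" "z = F x" by auto
      show "z \<in> usc_limit W psi s" unfolding usc_limit_def
      proof (intro CollectI conjI allI impI)
        fix e :: real assume "e \<le> 0" then show "z e = 0" unfolding x F_def by simp
      next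
        fix e :: real assume "0 < e" then show "z e \<in> W (shift_pt s e)"
          unfolding x F_def using Wmaps[OF sh_ge x(1)] by simp
      next
        fix e e' :: real assume "0 < e" "e \<le> e'"
        then show "psi (shift_pt s e) (shift_pt s e') (z e) = z e'"
          unfolding x F_def using Wcomp[OF sh_ge sh_le x(1)] by simp
      qed
    qed
    have sub2: "usc_limit W psi s \<subseteq> F ` W s"
    proof
      fix z assume z: "z \<in> usc_limit W psi s"
      have z0: "\<And>e. e \<le> 0 \<Longrightarrow> z e = 0" and zW: "\<And>e. 0 < e \<Longrightarrow> z e \<in> W (shift_pt s e)"
        and zc: "\<And>e e'. 0 < e \<Longrightarrow> e \<le> e' \<Longrightarrow> psi (shift_pt s e) (shift_pt s e') (z e) = z e'"
        using z unfolding usc_limit_def by auto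
      define y where "y = z e1"
      have y: "y \<in> W s" unfolding y_def using zW[OF e1(1)] dW[OF e1] by simp
      have "z = F y"
      proof
        fix e :: real
        show "z e = F y e"
        proof (cases "e \<le> 0")
          case True then show ?thesis using z0 unfolding F_def by simp
        next
          case False
          then have e: "0 < e" by simp
          show ?thesis
          proof (cases "e1 \<le> e")
            case True
            have "z e = psi (shift_pt s e1) (shift_pt s e) y" using zc[OF e1(1) True] unfolding y_def by simp
            also have "\<dots> = psi s (shift_pt s e) y" unfolding psi_def using dP[OF e1] by simp
            finally show ?thesis unfolding F_def using e by simp
          next
            case False
            then have ee: "e < d" "e \<le> e1" using e1 by auto
            have zeW: "z e \<in> V (P s)" using zW[OF e] dW[OF e ee(1)] WsubV by auto
            have "y = psi (shift_pt s e) (shift_pt s e1) (z e)" using zc[OF e ee(2)] unfolding y_def by simp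
            also have "\<dots> = z e" unfolding psi_def using dP[OF e ee(1)] dP[OF e1] idf[OF zeW] by simp
            finally have "z e = y" by simp
            then show ?thesis using Fsmall[OF y e ee(1)] by simp
          qed
        qed
      qed
      then show "z \<in> F ` W s" using y by blast
    qed
    show "bij_betw (\<lambda>x e. if 0 < e then psi s (shift_pt s e) x else 0) (W s) (usc_limit W psi s)"
      unfolding bij_betw_def F_def[symmetric] using inj sub1 sub2 by blast
  qed
  have GG: "\<And>s. G (G s) = G s" unfolding G_def using ep by (simp add: gf_idem)
  have gsp: "grid_sp W \<epsilon> = W" unfolding grid_sp_def W_def P_def
    by (fold G_def) (simp add: GG)
  have gmp: "grid_map psi \<epsilon> = psi" unfolding grid_map_def psi_def P_def
    by (fold G_def) (simp add: GG)
  have iso: "pmod_iso sc W psi sc (grid_sp W \<epsilon>) (grid_map psi \<epsilon>)"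
    unfolding gsp gmp pmod_iso_def pmod_hom_def
    by (intro exI[of _ "\<lambda>s x. x"]) (auto simp: lin_on_def bij_betw_def)
  have rW: "reg_lfp sc W psi" unfolding reg_lfp_def using qW uW fW iso ep by blast
  define f where "f s x = phi s (P (shift_pt s \<epsilon>)) x" for s x
  define g where "g s y = phi (P s) (shift_pt s \<epsilon>) y" for s y
  have il: "interleaving sc V phi sc W psi \<epsilon> f g"
    unfolding interleaving_def
  proof (intro conjI)
    show "pmod_hom sc V phi sc (shift_sp W \<epsilon>) (shift_map psi \<epsilon>) f"
      unfolding pmod_hom_def
    proof (intro conjI allI impI ballI)
      fix s show "lin_on sc sc (V s) (f s)" unfolding f_def using lin[OF sP] by simp
      show "f s ` V s \<subseteq> shift_sp W \<epsilon> s"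
      proof
        fix y assume "y \<in> f s ` V s"
        then obtain x where x: "x \<in> V s" "y = f s x" by auto
        have "y = phi (G (shift_pt s \<epsilon>)) (P (shift_pt s \<epsilon>)) (phi s (G (shift_pt s \<epsilon>)) x)"
          unfolding x f_def using comp[OF sG GP x(1)] by simp
        then show "y \<in> shift_sp W \<epsilon> s" unfolding shift_sp_def W_def using maps[OF sG x(1)] by blast
      qed
    next
      fix s t x assume st: "s \<le> t" and x: "x \<in> V s"
      have "f t (phi s t x) = phi s (P (shift_pt t \<epsilon>)) x" unfolding f_def
        using comp[OF st sP x] .
      moreover have "shift_map psi \<epsilon> s t (f s x) = phi s (P (shift_pt t \<epsilon>)) x"
        unfolding shift_map_def psi_def f_def using comp[OF sP Pmono[OF shift_mono[OF st]] x] .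
      ultimately show "f t (phi s t x) = shift_map psi \<epsilon> s t (f s x)" by simp
    qed
  next
    show "pmod_hom sc W psi sc (shift_sp V \<epsilon>) (shift_map phi \<epsilon>) g"
      unfolding pmod_hom_def
    proof (intro conjI allI impI ballI)
      fix s show "lin_on sc sc (W s) (g s)" unfolding g_def using lin_on_mono[OF lin[OF Pshift] WsubV] .
      show "g s ` W s \<subseteq> shift_sp V \<epsilon> s" unfolding g_def shift_sp_def using maps[OF Pshift] WsubV by blast
    next
      fix s t y assume st: "s \<le> t" and y: "y \<in> W s"
      have yV: "y \<in> V (P s)" using y WsubV by blast
      have "g t (psi s t y) = phi (P s) (shift_pt t \<epsilon>) y" unfolding g_def psi_def
        using comp[OF Pmono[OF st] Pshift yV] .
      moreover have "shift_map phi \<epsilon> s t (g s y) = phi (P s) (shift_pt t \<epsilon>) y"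
        unfolding shift_map_def g_def using comp[OF Pshift shift_mono[OF st] yV] .
      ultimately show "g t (psi s t y) = shift_map phi \<epsilon> s t (g s y)" by simp
    qed
  next
    show "\<forall>s. \<forall>x\<in>V s. g (shift_pt s \<epsilon>) (f s x) = phi s (shift_pt s (2 * \<epsilon>)) x"
    proof (intro allI ballI)
      fix s x assume x: "x \<in> V s"
      have "g (shift_pt s \<epsilon>) (f s x) = phi s (shift_pt (shift_pt s \<epsilon>) \<epsilon>) x"
        unfolding g_def f_def using comp[OF sP Pshift x] .
      then show "g (shift_pt s \<epsilon>) (f s x) = phi s (shift_pt s (2 * \<epsilon>)) x" by (simp add: shift_shift)
    qed
  next
    show "\<forall>s. \<forall>y\<in>W s. f (shift_pt s \<epsilon>) (g s y) = psi s (shift_pt s (2 * \<epsilon>)) y"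
    proof (intro allI ballI)
      fix s y assume y: "y \<in> W s"
      have yV: "y \<in> V (P s)" using y WsubV by blast
      have "f (shift_pt s \<epsilon>) (g s y) = phi (P s) (P (shift_pt (shift_pt s \<epsilon>) \<epsilon>)) y"
        unfolding g_def f_def using comp[OF Pshift sP yV] .
      then show "f (shift_pt s \<epsilon>) (g s y) = psi s (shift_pt s (2 * \<epsilon>)) y"
        unfolding psi_def by (simp add: shift_shift)
    qed
  qed
  have "d_I sc V phi sc W psi \<le> ereal \<epsilon>"
    unfolding d_I_def using il ep by (intro Inf_lower) auto
  also have "\<dots> < ereal delta" using ep by simp
  finally show ?thesis using pW rW by blast
qed

end
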